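(* Let $J_1,J_2$ be either (i) Lennard-Jones potentials: $J_1(z)=\frac{k_1}{z^{12}}-\frac{k_2}{z^6}$ for $z>0$, $J_1(z)=+\infty$ for $z\le0$, with $k_1,k_2>0$, and $J_2(z)=J_1(2z)$; or (ii) Morse potentials: $J_1(z)=k_1\big(1-e^{-k_2(z-\delta_1)}\big)^2-k_1$ for $z\in\mathbb R$ with $\delta_1,k_1,k_2>0$, and $J_2(z)=J_1(2z)$. Let $\delta_1$ be the unique minimizer of $J_1$ and $\gamma$ the unique minimizer of $J_0$. Then $J_1(\gamma)<0$, $J_2(\gamma)<0$, $J_2(\delta_1)<0$, $J_2(\gamma)>2J_2\big(\frac{\delta_1+\gamma}{2}\big)$, and $$R(t):=J_2\Big(\frac{\gamma+t}{2}\Big)+\frac12\big(J_1(\gamma)+J_1(t)\big)-J_0(\gamma)-\frac32\big(J_{CB}(t)-J_0(\gamma)\big)\le0\quad\text{for all }t\in\operatorname{dom}J_1.$$ Furthermore, for every $\theta>0$ there exists $\eta_\theta>0$ such that $J_2\big(\frac{t+\gamma}{2}\big)<0$ for all $t\in\operatorname{dom}J_1$ with $J_1(t)<J_1(\theta)+2\eta_\theta$.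
   Context: $J_{CB}:=J_1+J_2$; $J_0(z):=J_2(z)+\frac12\inf\{J_1(z_1)+J_1(z_2):z_1+z_2=2z\}$. It is known (from prior work) that these potentials satisfy the standing hypotheses of the paper; in particular $J_0$ has a unique minimizer $\gamma>0$, which coincides with the unique minimizer of $J_{CB}$, and $J_0(\gamma)=J_{CB}(\gamma)$. *)

theory Defs
  imports Complex_Main
begin

text \<open>Potentials are real-valued functions together with their effective domain
  D = dom J_1 (the set where J_1 is finite); outside D the paper's J_1 is +infinity,
  so all quantifications and infima are restricted to D.\<close>

definition LJ :: "real \<Rightarrow> real \<Rightarrow> real \<Rightarrow> real" where
  "LJ k1 k2 z = k1 / z ^ 12 - k2 / z ^ 6"

definition Morse :: "real \<Rightarrow> real \<Rightarrow> real \<Rightarrow> real \<Rightarrow> real" where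
  "Morse k1 k2 d1 z = k1 * (1 - exp (- k2 * (z - d1)))\<^sup>2 - k1"

definition JCB :: "(real \<Rightarrow> real) \<Rightarrow> (real \<Rightarrow> real) \<Rightarrow> real \<Rightarrow> real" where
  "JCB J1 J2 z = J1 z + J2 z"

definition J0 :: "real set \<Rightarrow> (real \<Rightarrow> real) \<Rightarrow> (real \<Rightarrow> real) \<Rightarrow> real \<Rightarrow> real" where
  "J0 D J1 J2 z = J2 z + 1/2 * Inf {J1 z1 + J1 z2 | z1 z2. z1 \<in> D \<and> z2 \<in> D \<and> z1 + z2 = 2 * z}"

definition is_minimizer_on :: "real set \<Rightarrow> (real \<Rightarrow> real) \<Rightarrow> real \<Rightarrow> bool" where
  "is_minimizer_on D f x \<longleftrightarrow> x \<in> D \<and> (\<forall>z\<in>D. f x \<le> f z)"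

end

theory Submission
  imports Defs
begin


lemma J0_upper:
  assumes "z \<in> D" and lb: "\<And>w. w \<in> D \<Longrightarrow> m \<le> J1 w"
  shows "J0 D J1 J2 z \<le> JCB J1 J2 z"
proof -
  let ?S = "{J1 z1 + J1 z2 | z1 z2. z1 \<in> D \<and> z2 \<in> D \<and> z1 + z2 = 2 * z}"
  have mem: "J1 z + J1 z \<in> ?S" using assms(1) by force
  have "bdd_below ?S" unfolding bdd_below_def using lb by (force intro!: add_mono)
  hence "Inf ?S \<le> J1 z + J1 z" using mem by (rule cInf_lower[rotated])
  thus ?thesis unfolding J0_def JCB_def by simp
qed

lemma J0_lower:
  assumes "z \<in> D" and lb: "\<And>z1 z2. z1 \<in> D \<Longrightarrow> z2 \<in> D \<Longrightarrow> z1 + z2 = 2 * z \<Longrightarrow> L \<le> J1 z1 + J1 z2"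
  shows "J2 z + L / 2 \<le> J0 D J1 J2 z"
proof -
  let ?S = "{J1 z1 + J1 z2 | z1 z2. z1 \<in> D \<and> z2 \<in> D \<and> z1 + z2 = 2 * z}"
  have mem: "J1 z + J1 z \<in> ?S" using assms(1) by force
  hence ne: "?S \<noteq> {}" by blast
  have "L \<le> Inf ?S" using ne by (rule cInf_greatest) (use lb in blast)
  thus ?thesis unfolding J0_def by simp
qed

lemma p6: "(x::real)^6 = (x^2)^3" by (simp flip: power_mult)
lemma cube_id: "((P::real)^3 + Q^3)/2 - ((P+Q)/2)^3 = 3/8 * ((P+Q) * (P-Q)^2)"
  by (simp add: field_simps power2_eq_square power3_eq_cube algebra_simps)
lemma pm6:
  fixes a b :: real assumes "a \<ge> 0" "b \<ge> 0"
  shows "((a+b)/2)^6 \<le> (a^6+b^6)/2"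
proof -
  have e1: "(a^2+b^2)/2 - ((a+b)/2)^2 = (a-b)^2/4" by (simp add: field_simps power2_eq_square algebra_simps)
  have 1: "((a+b)/2)^2 \<le> (a^2+b^2)/2" using e1 by (metis diff_ge_0_iff_ge zero_le_divide_iff zero_le_numeral zero_le_power2)
  have "((a+b)/2)^6 = (((a+b)/2)^2)^3" by (rule p6)
  also have "\<dots> \<le> ((a^2+b^2)/2)^3" by (rule power_mono[OF 1]) simp
  also have "\<dots> \<le> ((a^2)^3 + (b^2)^3)/2"
  proof -
    have e2: "((a^2)^3 + (b^2)^3)/2 - ((a^2+b^2)/2)^3 = 3/8 * ((a^2+b^2) * (a^2-b^2)^2)" by (rule cube_id)
    have "0 \<le> 3/8 * ((a^2+b^2) * (a^2-b^2)^2)" by simp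
    thus ?thesis using e2 by linarith
  qed
  also have "\<dots> = (a^6+b^6)/2" by (simp only: p6)
  finally show ?thesis .
qed

lemma inv6_conv:
  fixes z1 z2 :: real assumes "z1 > 0" "z2 > 0"
  shows "1 / ((z1+z2)/2)^6 \<le> (1/z1^6 + 1/z2^6)/2"
proof -
  have e: "(1/z1 + 1/z2)/2 - 1/((z1+z2)/2) = (z1-z2)^2/(2*z1*z2*(z1+z2))"
    using assms by (simp add: field_simps power2_eq_square algebra_simps)
  have "0 \<le> (z1-z2)^2/(2*z1*z2*(z1+z2))" using assms by simp
  hence "1/((z1+z2)/2) \<le> (1/z1 + 1/z2)/2" using e by linarith
  hence "(1/((z1+z2)/2))^6 \<le> ((1/z1 + 1/z2)/2)^6"
    by (rule power_mono) (use assms in simp)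
  also have "\<dots> \<le> ((1/z1)^6 + (1/z2)^6)/2" by (rule pm6) (use assms in auto)
  finally have "(1/((z1+z2)/2))^6 \<le> ((1/z1)^6 + (1/z2)^6)/2" .
  thus ?thesis by (simp only: power_one_over)
qed


lemma hlow: "(u::real)^2 - 2*u \<ge> -1"
proof -
  have "u^2-2*u = (u-1)^2 - 1" by algebra
  thus ?thesis by simp
qed

lemma hmid:
  fixes a b m :: real assumes "1 \<le> m" "2*m \<le> a + b"
  shows "2*(m^2-2*m) \<le> (a^2-2*a) + (b^2-2*b)"
proof -
  have e1: "(a^2-2*a) + (b^2-2*b) = (a-1)^2 + (b-1)^2 - 2" by algebra
  have e2': "2*((a-1)^2 + (b-1)^2) = (a+b-2)^2 + (a-b)^2" by algebra
  hence e2: "(a-1)^2 + (b-1)^2 = (a+b-2)^2/2 + (a-b)^2/2" by simp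
  have "(2*m-2)^2 \<le> (a+b-2)^2" by (rule power_mono) (use assms in auto)
  moreover have "2*(2*(m^2-2*m)) = (2*m-2)^2 - 4" by algebra
  moreover have "0 \<le> (a-b)^2/2" by simp
  ultimately show ?thesis using e1 e2 by linarith
qed


lemma LJpoly:
  fixes s G :: real assumes s: "s > 0" and G: "G = 4160/4097"
  shows "(G/(1+s)^6)^2 - 2*(G/(1+s)^6) + 1/2*(G^2 - 2*G)
     - ((G/s^6)^2 - 2*(G/s^6)) - 3/2*((G/s^6)^2/4096 - 2*(G/s^6)/64)
     + 1/2*(G^2 - 2*G + (G^2/4096 - 2*G/64)) \<le> 0"
proof -
  define Q where "Q = 34623875 * s^0 + 484734250 * s^1 + 3220020375 * s^2 + 13572559000 * s^3 + 41063915750 * s^4 + 95977381500 * s^5 + 182813535840 * s^6 + 296234536260 * s^7 + 422189408745 * s^8 + 540411713530 * s^9 + 626382098615 * s^10 + 657508617480 * s^11 + 624268169525 * s^12 + 536586508510 * s^13 + 417640386735 * s^14 + 292208004660 * s^15 + 180068463900 * s^16 + 94500986580 * s^17 + 40432240290 * s^18 + 13363775880 * s^19 + 3170487645 * s^20 + 477277710 * s^21 + 34091265 * s^22"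
  have Qp: "Q > 0" unfolding Q_def using s by (intro add_pos_pos add_nonneg_pos; simp)
  have s1: "1 + s > 0" using s by simp
  have eq: "(G/(1+s)^6)^2 - 2*(G/(1+s)^6) + 1/2*(G^2 - 2*G)
     - ((G/s^6)^2 - 2*(G/s^6)) - 3/2*((G/s^6)^2/4096 - 2*(G/s^6)/64)
     + 1/2*(G^2 - 2*G + (G^2/4096 - 2*G/64)) = -(((s - 1)^2) * Q) / (33570818 * s^12 * (1+s)^12)"
    using s s1 unfolding Q_def G by (simp add: field_simps) algebra
  show ?thesis unfolding eq using Qp s s1 by (simp add: divide_nonpos_pos)
qed

lemma LJ_case:
  fixes J1 J2 :: "real \<Rightarrow> real" and D :: "real set" and \<delta>1 \<gamma> k1 k2 :: real
  assumes k1: "k1 > 0" and k2: "k2 > 0" and D: "D = {0<..}" and J1def: "J1 = LJ k1 k2"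
    and J2_def: "J2 = (\<lambda>z. J1 (2 * z))"
    and delta1: "is_minimizer_on D J1 \<delta>1"
    and gamma: "is_minimizer_on D (J0 D J1 J2) \<gamma>"
  shows "J1 \<gamma> < 0 \<and> J2 \<gamma> < 0 \<and> J2 \<delta>1 < 0
     \<and> J2 \<gamma> > 2 * J2 ((\<delta>1 + \<gamma>) / 2)
     \<and> (\<forall>t\<in>D. J2 ((\<gamma> + t) / 2) + 1/2 * (J1 \<gamma> + J1 t) - J0 D J1 J2 \<gamma>
                 - 3/2 * (JCB J1 J2 t - J0 D J1 J2 \<gamma>) \<le> 0)
     \<and> (\<forall>\<theta>>0. \<exists>\<eta>>0. \<forall>t\<in>D. J1 t < J1 \<theta> + 2 * \<eta> \<longrightarrow> J2 ((t + \<gamma>) / 2) < 0)"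
proof -
  define K where "K = 2*k1/k2"
  define e where "e = k2^2/(4*k1)"
  define q where "q = (\<lambda>z::real. K / z^6)"
  define g :: real where "g = 4160/4097"
  have Kp: "K > 0" using k1 k2 by (simp add: K_def)
  have ep: "e > 0" using k1 k2 by (simp add: e_def)
  have qpos: "\<And>z. z > 0 \<Longrightarrow> q z > 0" using Kp by (simp add: q_def)
  have J1q: "\<And>z. z > 0 \<Longrightarrow> J1 z = e * ((q z)^2 - 2 * q z)"
    using k1 k2 unfolding J1def LJ_def q_def K_def e_def
    by (simp add: field_simps power2_eq_square power_mult_distrib)
  have q2: "\<And>z. z > 0 \<Longrightarrow> q (2*z) = q z / 64" unfolding q_def by (simp add: power_mult_distrib)
  have J2q: "\<And>z. z > 0 \<Longrightarrow> J2 z = e * ((q z)^2/4096 - 2*(q z)/64)"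
  proof -
    fix z :: real assume z: "z > 0"
    have "J2 z = e * ((q z / 64)^2 - 2 * (q z / 64))" using J1q[of "2*z"] q2[OF z] z by (simp add: J2_def del: mult_2)
    thus "J2 z = e * ((q z)^2/4096 - 2*(q z)/64)" by (simp add: power_divide)
  qed
  have J2mid: "\<And>a b. J2 ((a+b)/2) = J1 (a+b)"
  proof -
    fix a b :: real
    have "2*((a+b)/2) = a+b" by simp
    thus "J2 ((a+b)/2) = J1 (a+b)" by (simp only: J2_def)
  qed
  have low: "\<And>z. z \<in> D \<Longrightarrow> -e \<le> J1 z"
  proof -
    fix z assume "z \<in> D" hence z: "z > 0" using D by simp
    have "e * (-1) \<le> e * ((q z)^2 - 2 * q z)" by (rule mult_left_mono[OF hlow]) (use ep in simp)
    thus "-e \<le> J1 z" using J1q[OF z] by simp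
  qed
  have qconv: "\<And>z1 z2. z1 > 0 \<Longrightarrow> z2 > 0 \<Longrightarrow> q ((z1+z2)/2) \<le> (q z1 + q z2)/2"
  proof -
    fix z1 z2 :: real assume "z1 > 0" "z2 > 0"
    hence "K * (1 / ((z1+z2)/2)^6) \<le> K * ((1/z1^6 + 1/z2^6)/2)"
      using Kp by (intro mult_left_mono inv6_conv) auto
    thus "q ((z1+z2)/2) \<le> (q z1 + q z2)/2" by (simp add: q_def field_simps)
  qed
  have midpt: "\<And>z z1 z2. z > 0 \<Longrightarrow> z1 > 0 \<Longrightarrow> z2 > 0 \<Longrightarrow> z1 + z2 = 2*z \<Longrightarrow> 1 \<le> q z
      \<Longrightarrow> 2 * J1 z \<le> J1 z1 + J1 z2"
  proof -
    fix z z1 z2 :: real assume z: "z > 0" "z1 > 0" "z2 > 0" "z1 + z2 = 2*z" "1 \<le> q z"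
    have zz: "(z1+z2)/2 = z" using z by simp
    have "2 * q z \<le> q z1 + q z2" using qconv[OF z(2,3)] unfolding zz by simp
    hence "2*((q z)^2 - 2*q z) \<le> ((q z1)^2 - 2*q z1) + ((q z2)^2 - 2*q z2)"
      using z(5) by (intro hmid) auto
    hence "e * (2*((q z)^2 - 2*q z)) \<le> e * (((q z1)^2 - 2*q z1) + ((q z2)^2 - 2*q z2))"
      using ep by (intro mult_left_mono) auto
    thus "2 * J1 z \<le> J1 z1 + J1 z2" using J1q[OF z(1)] J1q[OF z(2)] J1q[OF z(3)] by (simp add: algebra_simps)
  qed
  have qroot: "\<And>x. x > 0 \<Longrightarrow> q (root 6 x) = K / x" by (simp add: q_def)
  define zs where "zs = root 6 (K/g)"
  define zd where "zd = root 6 K"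
  have zs: "zs > 0" "q zs = g" using Kp qroot[of "K/g"] by (auto simp: zs_def g_def)
  have zd: "zd > 0" "q zd = 1" using Kp qroot[of K] by (auto simp: zd_def)
  have gam: "\<gamma> > 0" "\<And>z. z > 0 \<Longrightarrow> J0 D J1 J2 \<gamma> \<le> J0 D J1 J2 z"
    using gamma D by (auto simp: is_minimizer_on_def)
  have del: "\<delta>1 > 0" "\<And>z. z > 0 \<Longrightarrow> J1 \<delta>1 \<le> J1 z"
    using delta1 D by (auto simp: is_minimizer_on_def)
  have JCBq: "\<And>z. z > 0 \<Longrightarrow> JCB J1 J2 z = e * ((q z)^2 - 2*q z + ((q z)^2/4096 - 2*(q z)/64))"
  proof -
    fix z :: real assume z: "z > 0"
    show "JCB J1 J2 z = e * ((q z)^2 - 2*q z + ((q z)^2/4096 - 2*(q z)/64))"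
      unfolding JCB_def J1q[OF z] J2q[OF z] by (simp add: algebra_simps)
  qed
  have up: "\<And>z. z > 0 \<Longrightarrow> J0 D J1 J2 z \<le> JCB J1 J2 z"
    by (rule J0_upper[where m="-e"]) (use D low in auto)
  have J0g_up: "J0 D J1 J2 \<gamma> \<le> e * (g^2 - 2*g + (g^2/4096 - 2*g/64))"
    using gam(2)[OF zs(1)] up[OF zs(1)] JCBq[OF zs(1)] zs(2) by simp
  have qg1: "1 \<le> q \<gamma>"
  proof (rule ccontr)
    assume "\<not> 1 \<le> q \<gamma>"
    hence u: "q \<gamma> < 1" by simp
    have u0: "q \<gamma> > 0" using qpos gam by auto
    have "J2 \<gamma> + (-2*e)/2 \<le> J0 D J1 J2 \<gamma>"
      by (rule J0_lower) (use D gam low in \<open>auto intro: add_mono[where a="-e" and c="-e", simplified]\<close>)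
    moreover have "(q \<gamma>)^2/4096 - 2*(q \<gamma>)/64 - (1/4096 - 2/64) = (q \<gamma> - 1) * ((q \<gamma> + 1)/4096 - 1/32)"
      by (simp add: field_simps power2_eq_square)
    moreover have "(q \<gamma> - 1) * ((q \<gamma> + 1)/4096 - 1/32) > 0"
      using u u0 by (intro mult_neg_neg) auto
    ultimately have dpos: "0 < (q \<gamma>)^2/4096 - 2*q \<gamma>/64 - (1/4096 - 2/64)" by simp
    have "e * (1/4096 - 2/64) < e * ((q \<gamma>)^2/4096 - 2*q \<gamma>/64)"
      by (rule mult_strict_left_mono) (use dpos ep in auto)
    hence A: "e * (1/4096 - 2/64) - e < J0 D J1 J2 \<gamma>"
      using J2q[OF gam(1)] \<open>J2 \<gamma> + (-2*e)/2 \<le> J0 D J1 J2 \<gamma>\<close> by simp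
    have "(g^2 - 2*g + (g^2/4096 - 2*g/64)) \<le> (1/4096 - 2/64 - 1)" unfolding g_def by (simp add: power2_eq_square)
    hence "e * (g^2 - 2*g + (g^2/4096 - 2*g/64)) \<le> e * (1/4096 - 2/64 - 1)"
      by (rule mult_left_mono) (use ep in simp)
    thus False using A J0g_up by (simp add: algebra_simps)
  qed
  have J0g_low: "JCB J1 J2 \<gamma> \<le> J0 D J1 J2 \<gamma>"
  proof -
    have "J2 \<gamma> + (2 * J1 \<gamma>)/2 \<le> J0 D J1 J2 \<gamma>"
      by (rule J0_lower) (use D gam midpt qg1 in auto)
    thus ?thesis by (simp add: JCB_def)
  qed
  have qg: "q \<gamma> = g"
  proof -
    have "e * ((q \<gamma>)^2 - 2*q \<gamma> + ((q \<gamma>)^2/4096 - 2*(q \<gamma>)/64)) \<le> e * (g^2 - 2*g + (g^2/4096 - 2*g/64))"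
      using J0g_low J0g_up JCBq[OF gam(1)] by simp
    hence "(q \<gamma>)^2 - 2*q \<gamma> + ((q \<gamma>)^2/4096 - 2*(q \<gamma>)/64) \<le> g^2 - 2*g + (g^2/4096 - 2*g/64)"
      using ep by simp
    moreover have "(q \<gamma>)^2 - 2*q \<gamma> + ((q \<gamma>)^2/4096 - 2*(q \<gamma>)/64) - (g^2 - 2*g + (g^2/4096 - 2*g/64))
        = 4097/4096 * (q \<gamma> - g)^2"
      unfolding g_def by (simp add: field_simps power2_eq_square)
    ultimately have "4097/4096 * (q \<gamma> - g)^2 \<le> 0" by linarith
    hence "(q \<gamma> - g)^2 \<le> 0" by simp
    thus ?thesis by simp
  qed
  have qd: "q \<delta>1 = 1"
  proof -
    have "J1 \<delta>1 \<le> J1 zd" using del(2)[OF zd(1)] .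
    hence "e * ((q \<delta>1)^2 - 2*q \<delta>1) \<le> e * (1 - 2)" using J1q[OF del(1)] J1q[OF zd(1)] zd(2) by simp
    hence "e * ((q \<delta>1)^2 - 2*q \<delta>1) \<le> e * (-1)" by simp
    hence "(q \<delta>1)^2 - 2*q \<delta>1 \<le> -1" by (rule mult_left_le_imp_le) (use ep in simp)
    moreover have "(q \<delta>1)^2 - 2*q \<delta>1 = (q \<delta>1 - 1)^2 - 1" by algebra
    ultimately have "(q \<delta>1 - 1)^2 \<le> 0" by simp
    thus ?thesis by simp
  qed
  have g6: "\<gamma>^6 = K / g" using qg gam(1) unfolding q_def g_def by (simp add: field_simps)
  have d6: "\<delta>1^6 = K" using qd del(1) unfolding q_def by (simp add: field_simps)
  have c1: "J1 \<gamma> < 0" using J1q[OF gam(1)] qg ep unfolding g_def by (simp add: mult_pos_neg power2_eq_square)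
  have c2: "J2 \<gamma> < 0" using J2q[OF gam(1)] qg ep unfolding g_def by (simp add: mult_pos_neg power2_eq_square)
  have c3: "J2 \<delta>1 < 0" using J2q[OF del(1)] qd ep by (simp add: mult_pos_neg)
  have gd: "\<gamma> < \<delta>1"
  proof -
    have "\<gamma>^6 < \<delta>1^6" using g6 d6 Kp unfolding g_def by (simp add: field_simps)
    thus ?thesis by (rule power_less_imp_less_base) (use del(1) in simp)
  qed
  have c4: "J2 \<gamma> > 2 * J2 ((\<delta>1 + \<gamma>) / 2)"
  proof -
    define v where "v = q (\<delta>1 + \<gamma>)"
    have J2m: "J2 ((\<delta>1 + \<gamma>) / 2) = e * (v^2 - 2*v)"
    proof -
      have "\<delta>1 + \<gamma> > 0" using gam(1) del(1) by simp
      from J1q[OF this] show ?thesis by (simp add: J2mid v_def)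
    qed
    have "(\<delta>1 + \<gamma>)^6 \<le> (2*\<delta>1)^6" by (rule power_mono) (use gd gam in auto)
    hence "(\<delta>1 + \<gamma>)^6 \<le> 64 * K" using d6 by (simp add: power_mult_distrib)
    hence v1: "1/64 \<le> v" using Kp gam del unfolding v_def q_def by (simp add: field_simps)
    have "\<delta>1^6 \<le> (\<delta>1 + \<gamma>)^6" by (rule power_mono) (use gam del in auto)
    hence v2: "v \<le> 1" using Kp gam del d6 unfolding v_def q_def by (simp add: field_simps)
    have "(v^2 - 2*v) - (1/4096 - 2/64) = (v - 1/64) * (v + 1/64 - 2)" by (simp add: field_simps power2_eq_square)
    moreover have "(v - 1/64) * (v + 1/64 - 2) \<le> 0" using v1 v2 by (intro mult_nonneg_nonpos) auto
    ultimately have "v^2 - 2*v \<le> 1/4096 - 2/64" by simp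
    hence "e * (v^2 - 2*v) \<le> e * (1/4096 - 2/64)" by (rule mult_left_mono) (use ep in simp)
    hence "2 * (e * (v^2 - 2*v)) \<le> 2 * (e * (1/4096 - 2/64))" by linarith
    moreover have "2 * (e * (1/4096 - 2/64)) < e * (g^2/4096 - 2*g/64)" using ep unfolding g_def by (simp add: power2_eq_square)
    ultimately show ?thesis using J2m J2q[OF gam(1)] qg by simp
  qed
  have c5: "\<forall>t\<in>D. J2 ((\<gamma> + t) / 2) + 1/2 * (J1 \<gamma> + J1 t) - J0 D J1 J2 \<gamma>
                 - 3/2 * (JCB J1 J2 t - J0 D J1 J2 \<gamma>) \<le> 0"
  proof
    fix t assume "t \<in> D" hence t: "t > 0" using D by simp
    define s where "s = t / \<gamma>"
    have s: "s > 0" using t gam by (simp add: s_def)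
    have ts: "t = \<gamma> * s" using gam by (simp add: s_def)
    have Kg: "K/\<gamma>^6 = g" using qg by (simp add: q_def)
    have qt: "q t = g / s^6"
    proof -
      have "q (\<gamma>*s) = (K/\<gamma>^6)/s^6" by (simp add: q_def power_mult_distrib divide_divide_eq_left)
      thus ?thesis using Kg ts by simp
    qed
    have qgt: "q (\<gamma> + t) = g / (1+s)^6"
    proof -
      have e1: "\<gamma> + t = \<gamma>*(1+s)" using ts by (simp add: algebra_simps)
      have "q (\<gamma>*(1+s)) = (K/\<gamma>^6)/(1+s)^6" by (simp add: q_def power_mult_distrib divide_divide_eq_left)
      thus ?thesis using Kg e1 by simp
    qed
    have gt: "\<gamma> + t > 0" using gam(1) t by simp
    have mid: "J2 ((\<gamma> + t) / 2) = e * ((g / (1+s)^6)^2 - 2 * (g / (1+s)^6))"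
      using J1q[OF gt] qgt by (simp add: J2mid)
    have "J2 ((\<gamma> + t) / 2) + 1/2 * (J1 \<gamma> + J1 t) - J0 D J1 J2 \<gamma>
                 - 3/2 * (JCB J1 J2 t - J0 D J1 J2 \<gamma>)
         = J2 ((\<gamma> + t) / 2) + 1/2 * J1 \<gamma> - J1 t - 3/2 * J2 t + 1/2 * J0 D J1 J2 \<gamma>"
      by (simp add: JCB_def field_simps)
    also have "\<dots> \<le> J2 ((\<gamma> + t) / 2) + 1/2 * J1 \<gamma> - J1 t - 3/2 * J2 t + 1/2 * JCB J1 J2 \<gamma>"
      using up[OF gam(1)] by simp
    also have "\<dots> = e * ((g/(1+s)^6)^2 - 2*(g/(1+s)^6) + 1/2*(g^2 - 2*g)
     - ((g/s^6)^2 - 2*(g/s^6)) - 3/2*((g/s^6)^2/4096 - 2*(g/s^6)/64)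
     + 1/2*(g^2 - 2*g + (g^2/4096 - 2*g/64)))"
      using mid J1q[OF gam(1)] J1q[OF t] J2q[OF t] JCBq[OF gam(1)] qg qt by (simp add: algebra_simps)
    also have "\<dots> \<le> 0" using LJpoly[OF s g_def] ep by (simp add: mult_nonneg_nonpos)
    finally show "J2 ((\<gamma> + t) / 2) + 1/2 * (J1 \<gamma> + J1 t) - J0 D J1 J2 \<gamma>
                 - 3/2 * (JCB J1 J2 t - J0 D J1 J2 \<gamma>) \<le> 0" .
  qed
  have c6: "\<forall>\<theta>>0. \<exists>\<eta>>0. \<forall>t\<in>D. J1 t < J1 \<theta> + 2 * \<eta> \<longrightarrow> J2 ((t + \<gamma>) / 2) < 0"
  proof (intro allI impI exI[of _ 1] conjI ballI)
    fix t assume "t \<in> D" hence t: "t > 0" using D by simp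
    define w where "w = q (t + \<gamma>)"
    have "\<gamma>^6 < (t + \<gamma>)^6" by (rule power_strict_mono) (use t gam in auto)
    hence w1: "w < g" using Kp g6 gam t unfolding w_def q_def g_def by (simp add: field_simps)
    have w0: "w > 0" using qpos t gam by (simp add: w_def)
    have tg: "t + \<gamma> > 0" using t gam(1) by simp
    have "J2 ((t + \<gamma>) / 2) = e * (w * (w - 2))" using J1q[OF tg]
      by (simp add: J2mid w_def algebra_simps power2_eq_square)
    moreover have "w * (w - 2) < 0" using w0 w1 unfolding g_def by (intro mult_pos_neg) auto
    ultimately show "J2 ((t + \<gamma>) / 2) < 0" using ep by (simp add: mult_pos_neg)
  qed simp
  show ?thesis using c1 c2 c3 c4 c5 c6 by blast
qed

lemma morse_mid:
  fixes a b :: real assumes "a > 0" "b > 0" "a * b \<ge> 1/2"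
  shows "2*((a*b)^2 - 2*(a*b)) \<le> ((a^2)^2 - 2*a^2) + ((b^2)^2 - 2*b^2)"
proof -
  have e: "((a^2)^2 - 2*a^2) + ((b^2)^2 - 2*b^2) - 2*((a*b)^2 - 2*(a*b)) = (a-b)^2 * ((a+b)^2 - 2)" by algebra
  have e2: "(a+b)^2 = (a-b)^2 + 4*(a*b)" by algebra
  have "0 \<le> (a+b)^2 - 2" using e2 assms(3) zero_le_power2[of "a-b"] by linarith
  hence "0 \<le> (a-b)^2 * ((a+b)^2 - 2)" by simp
  thus ?thesis using e by linarith
qed

lemma cubic_pos:
  fixes x c :: real assumes "0 < x" "x < 2" "0 < c" "c < 1"
  shows "0 < c*x^3 - 2*(1+c)*x + 4"
proof (cases "x^2 \<ge> 2")
  case True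
  have e: "c*x^3 - 2*(1+c)*x + 4 = c*x*(x^2-2) + 2*(2-x)" by (simp add: algebra_simps power2_eq_square power3_eq_cube)
  have "0 \<le> c*x*(x^2-2)" using True assms by simp
  thus ?thesis unfolding e using assms by (intro add_nonneg_pos) auto
next
  case False
  have e: "c*x^3 - 2*(1+c)*x + 4 = (1-c)*x*(2 - x^2) + ((x-1)^2*(x+2) + (2-x))"
    by (simp add: algebra_simps power2_eq_square power3_eq_cube)
  have "0 \<le> (1-c)*x*(2 - x^2)" using False assms by simp
  moreover have "0 \<le> (x-1)^2*(x+2)" using assms by simp
  ultimately show ?thesis unfolding e using assms by (intro add_nonneg_pos add_nonneg_pos) auto
qed

lemma morse_B:
  fixes x c y :: real assumes x: "0 < x" and c: "0 < c" "c < 1" and y: "0 < y"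
    and con: "2*c^2*x^3 - 2*c*x + x = 1"
  shows "0 \<le> c^2*(3/2*y^2 + 3*x*y + 7/2*x^2) + 1 - 3*c"
proof -
  have B0: "0 \<le> 7*c^2*x^2 + 2 - 6*c"
  proof (rule ccontr)
    assume "\<not> ?thesis"
    hence A: "7*c^2*x^2 < 6*c - 2" by simp
    define P where "P = 2*c^2*x^2 + 1 - 2*c"
    have xP: "x * P = 1" using con unfolding P_def by (simp add: algebra_simps power2_eq_square power3_eq_cube)
    have "P < (3 - 2*c)/7" using A unfolding P_def by simp
    hence "x * P < x * ((3 - 2*c)/7)" using x by simp
    hence "7 < x * (3 - 2*c)" using xP by simp
    hence "c * 7 < c * (x * (3 - 2*c))" using c by simp
    hence "(c*7)^2 < (c * (x * (3 - 2*c)))^2" by (rule power_strict_mono) (use c in auto)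
    hence "49*c^2 < c^2*x^2*(3-2*c)^2" by (simp add: power_mult_distrib)
    moreover have "c^2*x^2*(3-2*c)^2 \<le> c^2*x^2*9"
    proof (rule mult_left_mono)
      have "(3-2*c)^2 \<le> 3^2" by (rule power_mono) (use c in auto)
      thus "(3-2*c)^2 \<le> 9" by simp
    qed simp
    moreover have "c > 1/3"
    proof -
      have "0 \<le> 7*c^2*x^2" by simp
      thus ?thesis using A by linarith
    qed
    moreover have "1/9 < c^2"
    proof -
      have "(1/3)^2 < c^2" by (rule power_strict_mono) (use \<open>c > 1/3\<close> in auto)
      thus ?thesis by (simp add: power2_eq_square)
    qed
    ultimately have "49/81 < c^2*x^2" by linarith
    thus False using A c by linarith
  qed
  have "0 \<le> c^2*(3/2*y^2 + 3*x*y)" using x y by simp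
  thus ?thesis using B0 by (simp add: algebra_simps)
qed

lemma Morse_case:
  fixes J1 J2 :: "real \<Rightarrow> real" and D :: "real set" and \<delta>1 \<gamma> k1 k2 d1 :: real
  assumes k1: "k1 > 0" and k2: "k2 > 0" and d1: "d1 > 0" and D: "D = UNIV" and J1def: "J1 = Morse k1 k2 d1"
    and J2_def: "J2 = (\<lambda>z. J1 (2 * z))"
    and delta1: "is_minimizer_on D J1 \<delta>1"
    and gamma: "is_minimizer_on D (J0 D J1 J2) \<gamma>"
  shows "J1 \<gamma> < 0 \<and> J2 \<gamma> < 0 \<and> J2 \<delta>1 < 0
     \<and> J2 \<gamma> > 2 * J2 ((\<delta>1 + \<gamma>) / 2)
     \<and> (\<forall>t\<in>D. J2 ((\<gamma> + t) / 2) + 1/2 * (J1 \<gamma> + J1 t) - J0 D J1 J2 \<gamma>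
                 - 3/2 * (JCB J1 J2 t - J0 D J1 J2 \<gamma>) \<le> 0)
     \<and> (\<forall>\<theta>>0. \<exists>\<eta>>0. \<forall>t\<in>D. J1 t < J1 \<theta> + 2 * \<eta> \<longrightarrow> J2 ((t + \<gamma>) / 2) < 0)"
proof -
  define X where "X = (\<lambda>z::real. exp (-k2*(z-d1)))"
  define c where "c = exp (-k2*d1)"
  define f where "f = (\<lambda>y::real. y^2 - 2*y + ((c*y^2)^2 - 2*(c*y^2)))"
  have c0: "0 < c" "c < 1" using k2 d1 by (auto simp: c_def)
  have Xpos: "\<And>z. X z > 0" by (simp add: X_def)
  have Xmul: "\<And>u v. X u * X v = X (u + v - d1)"
    unfolding X_def by (simp add: exp_add[symmetric] algebra_simps)
  have X2: "\<And>z. X (2*z) = c * (X z)^2"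
  proof -
    fix z :: real
    show "X (2*z) = c * (X z)^2" unfolding X_def c_def power2_eq_square by (simp add: mult_exp_exp algebra_simps)
  qed
  have Xd1: "X d1 = 1" by (simp add: X_def)
  have Xsurj: "\<And>y. y > 0 \<Longrightarrow> X (d1 - ln y / k2) = y"
    using k2 by (simp add: X_def)
  have J1X: "\<And>z. J1 z = k1 * ((X z)^2 - 2 * X z)"
    unfolding J1def Morse_def X_def by (simp add: power2_eq_square algebra_simps)
  have J2X: "\<And>z. J2 z = k1 * ((c*(X z)^2)^2 - 2 * (c*(X z)^2))"
    by (simp add: J2_def J1X X2)
  have J2mid: "\<And>a b. J2 ((a+b)/2) = J1 (a+b)"
  proof -
    fix a b :: real
    have "2*((a+b)/2) = a+b" by simp
    thus "J2 ((a+b)/2) = J1 (a+b)" by (simp only: J2_def)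
  qed
  have JCBX: "\<And>z. JCB J1 J2 z = k1 * f (X z)"
    by (simp add: JCB_def J1X J2X f_def algebra_simps)
  have low: "\<And>z. -k1 \<le> J1 z"
  proof -
    fix z
    have "k1 * (-1) \<le> k1 * ((X z)^2 - 2 * X z)" by (rule mult_left_mono[OF hlow]) (use k1 in simp)
    thus "-k1 \<le> J1 z" using J1X[of z] by simp
  qed
  have midpt: "\<And>z z1 z2. z1 + z2 = 2*z \<Longrightarrow> 1/2 \<le> X z \<Longrightarrow> 2 * J1 z \<le> J1 z1 + J1 z2"
  proof -
    fix z z1 z2 :: real assume z: "z1 + z2 = 2*z" "1/2 \<le> X z"
    define a where "a = X ((z1+d1)/2)"
    define b where "b = X ((z2+d1)/2)"
    have a2: "a^2 = X z1" unfolding a_def power2_eq_square Xmul by simp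
    have b2: "b^2 = X z2" unfolding b_def power2_eq_square Xmul by simp
    have ab: "a*b = X z" unfolding a_def b_def Xmul using z(1)
      by (metis add_diff_cancel_right' add_divide_distrib add.commute add.left_commute field_sum_of_halves mult_2 nonzero_mult_div_cancel_left zero_neq_numeral)
    have "2*((a*b)^2 - 2*(a*b)) \<le> ((a^2)^2 - 2*a^2) + ((b^2)^2 - 2*b^2)"
      by (rule morse_mid) (use Xpos z ab in \<open>auto simp: a_def b_def\<close>)
    hence "k1 * (2*((a*b)^2 - 2*(a*b))) \<le> k1 * (((a^2)^2 - 2*a^2) + ((b^2)^2 - 2*b^2))"
      by (rule mult_left_mono) (use k1 in simp)
    thus "2 * J1 z \<le> J1 z1 + J1 z2" unfolding J1X a2 b2 ab[symmetric] by (simp add: algebra_simps)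
  qed
  have gam: "\<And>z. J0 D J1 J2 \<gamma> \<le> J0 D J1 J2 z"
    using gamma D by (auto simp: is_minimizer_on_def)
  have del: "\<And>z. J1 \<delta>1 \<le> J1 z"
    using delta1 D by (auto simp: is_minimizer_on_def)
  have up: "\<And>z. J0 D J1 J2 z \<le> JCB J1 J2 z"
    by (rule J0_upper[where m="-k1"]) (use D low in auto)
  have J0g_up: "J0 D J1 J2 \<gamma> \<le> k1 * (c^2 - 2*c - 1)"
    using gam[of d1] up[of d1] JCBX[of d1] Xd1 by (simp add: f_def power2_eq_square algebra_simps)
  define x where "x = X \<gamma>"
  have x0: "x > 0" by (simp add: x_def Xpos)
  have xh: "1/2 \<le> x"
  proof (rule ccontr)
    assume "\<not> 1/2 \<le> x"
    hence xl: "x < 1/2" by simp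
    define w where "w = c*x^2"
    have w0: "0 < w" using c0 x0 by (simp add: w_def)
    have "x^2 < (1/2)^2" by (rule power_strict_mono) (use xl x0 in auto)
    hence wl: "w < c/4" using c0 by (simp add: w_def power2_eq_square)
    have "J2 \<gamma> + (-2*k1)/2 \<le> J0 D J1 J2 \<gamma>"
      by (rule J0_lower) (use D low in \<open>auto intro: add_mono[where a="-k1" and c="-k1", simplified]\<close>)
    hence A: "k1 * (w^2 - 2*w) - k1 \<le> J0 D J1 J2 \<gamma>" using J2X[of \<gamma>] by (simp add: w_def x_def)
    have "(w^2 - 2*w) - ((c/4)^2 - 2*(c/4)) = (w - c/4) * (w + c/4 - 2)" by (simp add: algebra_simps power2_eq_square)
    moreover have "0 < (w - c/4) * (w + c/4 - 2)" using wl c0 by (intro mult_neg_neg) auto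
    ultimately have "(c/4)^2 - 2*(c/4) < w^2 - 2*w" by simp
    moreover have "c^2 - 2*c - 1 < (c/4)^2 - 2*(c/4) - 1"
    proof -
      have "c*(15*c/16 - 3/2) < 0" using c0 by (intro mult_pos_neg) auto
      thus ?thesis by (simp add: algebra_simps power2_eq_square)
    qed
    ultimately have "c^2 - 2*c - 1 < w^2 - 2*w - 1" by linarith
    hence "k1 * (c^2 - 2*c - 1) < k1 * (w^2 - 2*w - 1)" using k1 by simp
    thus False using A J0g_up by (simp add: algebra_simps)
  qed
  have J0g_low: "JCB J1 J2 \<gamma> \<le> J0 D J1 J2 \<gamma>"
  proof -
    have "J2 \<gamma> + (2 * J1 \<gamma>)/2 \<le> J0 D J1 J2 \<gamma>"
      by (rule J0_lower) (use D midpt xh in \<open>auto simp: x_def\<close>)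
    thus ?thesis by (simp add: JCB_def)
  qed
  have fmin: "\<And>y. y > 0 \<Longrightarrow> f x \<le> f y"
  proof -
    fix y :: real assume y: "y > 0"
    have "JCB J1 J2 \<gamma> \<le> JCB J1 J2 (d1 - ln y / k2)" using J0g_low gam up by (meson order_trans)
    hence "k1 * f x \<le> k1 * f y" using JCBX Xsurj[OF y] by (simp add: x_def)
    thus "f x \<le> f y" using k1 by simp
  qed
  have con: "2*c^2*x^3 - 2*c*x + x = 1"
  proof -
    have "(f has_real_derivative (2*x - 2 + 4*c^2*x^3 - 4*c*x)) (at x)"
      unfolding f_def by (auto intro!: derivative_eq_intros simp: algebra_simps power2_eq_square power3_eq_cube)
    hence "2*x - 2 + 4*c^2*x^3 - 4*c*x = 0"
      by (rule DERIV_local_min[OF _ x0]) (use fmin in auto)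
    thus ?thesis by simp
  qed
  have x2: "x < 2"
  proof (rule ccontr)
    assume "\<not> x < 2" hence "x \<ge> 2" by simp
    have "1 = x * (2*c^2*x^2 - 2*c + 1)" using con by (simp add: algebra_simps power2_eq_square power3_eq_cube)
    moreover have "2*c^2*x^2 \<ge> 2*c^2*2^2" using \<open>x \<ge> 2\<close> c0 by (intro mult_left_mono power_mono) auto
    moreover have "8*c^2 - 2*c + 1 > 1/2"
    proof -
      have "8*c^2 - 2*c + 1 - 1/2 = 8*(c - 1/8)^2 + 3/8" by (simp add: algebra_simps power2_eq_square)
      thus ?thesis using zero_le_power2[of "c - 1/8"] by linarith
    qed
    ultimately have P: "2*c^2*x^2 - 2*c + 1 > 1/2" by simp
    have "2 * (2*c^2*x^2 - 2*c + 1) \<le> x * (2*c^2*x^2 - 2*c + 1)"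
      by (rule mult_right_mono) (use P \<open>x \<ge> 2\<close> in auto)
    moreover have gen: "\<And>p q::real. 2*p \<le> q \<Longrightarrow> 1/2 < p \<Longrightarrow> 1 = q \<Longrightarrow> False" by linarith
    ultimately show False using P \<open>1 = x * (2*c^2*x^2 - 2*c + 1)\<close> by blast
  qed
  have cx1: "c * x < 1"
  proof (rule ccontr)
    assume "\<not> c * x < 1" hence h: "c*x \<ge> 1" by simp
    have "c * x < 1 * x" by (rule mult_strict_right_mono) (use c0 x0 in auto)
    hence x1: "x > 1" using h by simp
    have "2*c^2*x^3 = 2*(c*x)^2*x" by (simp add: power2_eq_square power3_eq_cube)
    moreover have "(c*x)^2 \<ge> 1" using h by (simp add: one_le_power)
    ultimately have "2*c^2*x^3 \<ge> 2*x" using x0 by simp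
    hence "1 \<ge> x*(3 - 2*c)" using con by (simp add: algebra_simps)
    moreover have "1*1 < x*(3-2*c)" by (rule mult_strict_mono) (use x1 c0 in auto)
    ultimately show False by simp
  qed
  have Xmid: "\<And>a b. (X ((a+b)/2))^2 = X a * X b"
  proof -
    fix a b :: real
    have "(X ((a+b)/2))^2 = X (a + b - d1)" unfolding power2_eq_square Xmul by simp
    also have "\<dots> = X a * X b" by (simp add: Xmul)
    finally show "(X ((a+b)/2))^2 = X a * X b" .
  qed
  have w2: "c * x^2 < 2"
  proof -
    have "c * x^2 = (c*x) * x" by (simp add: power2_eq_square)
    also have "\<dots> < 1 * 2" by (rule mult_strict_mono) (use cx1 x2 x0 c0 in auto)
    finally show ?thesis by simp
  qed
  have c1: "J1 \<gamma> < 0"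
  proof -
    have "J1 \<gamma> = k1 * (x * (x - 2))" by (simp add: J1X x_def power2_eq_square algebra_simps)
    moreover have "x * (x - 2) < 0" using x0 x2 by (intro mult_pos_neg) auto
    ultimately show ?thesis using k1 by (simp add: mult_pos_neg)
  qed
  have c2: "J2 \<gamma> < 0"
  proof -
    have "J2 \<gamma> = k1 * ((c*x^2) * ((c*x^2) - 2))" by (simp add: J2X x_def power2_eq_square algebra_simps)
    moreover have "(c*x^2) * ((c*x^2) - 2) < 0" using x0 c0 w2 by (intro mult_pos_neg) auto
    ultimately show ?thesis using k1 by (simp add: mult_pos_neg)
  qed
  have Xd: "X \<delta>1 = 1"
  proof -
    have "J1 \<delta>1 \<le> J1 d1" by (rule del)
    hence "k1 * ((X \<delta>1)^2 - 2 * X \<delta>1) \<le> k1 * (-1)" using J1X Xd1 by simp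
    hence "(X \<delta>1)^2 - 2 * X \<delta>1 \<le> -1" by (rule mult_left_le_imp_le) (use k1 in simp)
    moreover have "(X \<delta>1)^2 - 2 * X \<delta>1 = (X \<delta>1 - 1)^2 - 1" by algebra
    ultimately have "(X \<delta>1 - 1)^2 \<le> 0" by simp
    thus ?thesis by simp
  qed
  have c3: "J2 \<delta>1 < 0"
  proof -
    have "J2 \<delta>1 = k1 * (c * (c - 2))" by (simp add: J2X Xd power2_eq_square algebra_simps)
    moreover have "c * (c - 2) < 0" using c0 by (intro mult_pos_neg) auto
    ultimately show ?thesis using k1 by (simp add: mult_pos_neg)
  qed
  have c4: "J2 \<gamma> > 2 * J2 ((\<delta>1 + \<gamma>) / 2)"
  proof -
    have m: "(X ((\<delta>1 + \<gamma>) / 2))^2 = x" using Xmid[of \<delta>1 \<gamma>] Xd by (simp add: x_def)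
    have "J2 \<gamma> - 2 * J2 ((\<delta>1 + \<gamma>) / 2) = k1 * (c * x * (c*x^3 - 2*(1+c)*x + 4))"
      unfolding J2X m by (simp add: x_def power2_eq_square power3_eq_cube algebra_simps)
    moreover have "0 < k1 * (c * x * (c*x^3 - 2*(1+c)*x + 4))"
      using k1 c0 x0 cubic_pos[OF x0 x2 c0] by simp
    ultimately show ?thesis by simp
  qed
  have c5: "\<forall>t\<in>D. J2 ((\<gamma> + t) / 2) + 1/2 * (J1 \<gamma> + J1 t) - J0 D J1 J2 \<gamma>
                 - 3/2 * (JCB J1 J2 t - J0 D J1 J2 \<gamma>) \<le> 0"
  proof
    fix t assume "t \<in> D"
    define y where "y = X t"
    have y0: "y > 0" by (simp add: y_def Xpos)
    have m: "(X ((\<gamma> + t) / 2))^2 = x * y" using Xmid[of \<gamma> t] by (simp add: x_def y_def)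
    have "J2 ((\<gamma> + t) / 2) + 1/2 * (J1 \<gamma> + J1 t) - J0 D J1 J2 \<gamma>
                 - 3/2 * (JCB J1 J2 t - J0 D J1 J2 \<gamma>)
         = J2 ((\<gamma> + t) / 2) + 1/2 * J1 \<gamma> - J1 t - 3/2 * J2 t + 1/2 * J0 D J1 J2 \<gamma>"
      by (simp add: JCB_def field_simps)
    also have "\<dots> \<le> J2 ((\<gamma> + t) / 2) + 1/2 * J1 \<gamma> - J1 t - 3/2 * J2 t + 1/2 * JCB J1 J2 \<gamma>"
      using up[of \<gamma>] by simp
    also have "\<dots> = k1 * ((c*(x*y))^2 - 2*(c*(x*y)) + 1/2*(x^2-2*x) - (y^2-2*y)
          - 3/2*((c*y^2)^2 - 2*(c*y^2)) + 1/2 * f x)"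
      unfolding J2X m JCBX by (simp add: J1X x_def y_def algebra_simps)
    also have "\<dots> = k1 * (-((y-x)^2 * (c^2*(3/2*y^2 + 3*x*y + 7/2*x^2) + 1 - 3*c))
          - (y-x) * (2*(2*c^2*x^3 - 2*c*x + x - 1)))"
      unfolding f_def by (simp add: field_simps power2_eq_square power3_eq_cube)
    also have "\<dots> = k1 * (-((y-x)^2 * (c^2*(3/2*y^2 + 3*x*y + 7/2*x^2) + 1 - 3*c)))"
      using con by simp
    also have "\<dots> \<le> 0"
      using morse_B[OF x0 c0 y0 con] k1 by (simp add: mult_nonneg_nonneg)
    finally show "J2 ((\<gamma> + t) / 2) + 1/2 * (J1 \<gamma> + J1 t) - J0 D J1 J2 \<gamma>
                 - 3/2 * (JCB J1 J2 t - J0 D J1 J2 \<gamma>) \<le> 0" .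
  qed
  have c6: "\<forall>\<theta>>0. \<exists>\<eta>>0. \<forall>t\<in>D. J1 t < J1 \<theta> + 2 * \<eta> \<longrightarrow> J2 ((t + \<gamma>) / 2) < 0"
  proof (intro allI impI)
    fix \<theta> :: real assume th: "\<theta> > 0"
    define p where "p = X \<theta>"
    define Y where "Y = 2 / (c * x)"
    have p0: "p > 0" by (simp add: p_def Xpos)
    have cp: "c * p < 1"
    proof -
      have "c * p = exp (-k2*\<theta>)" unfolding c_def p_def X_def by (simp add: mult_exp_exp algebra_simps)
      also have "\<dots> < 1" using k2 th by simp
      finally show ?thesis .
    qed
    have cxp: "0 < c * x" using c0 x0 by simp
    have Y2: "Y > 2" unfolding Y_def using cx1 cxp by (simp add: field_simps)
    have Yp: "p < Y"
    proof -
      have "(c*p) * x < 1 * 2" by (rule mult_strict_mono) (use cp x2 x0 c0 p0 in auto)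
      hence "p * (c * x) < 2" by (simp add: algebra_simps)
      thus ?thesis unfolding Y_def using cxp by (simp add: field_simps)
    qed
    define \<eta> where "\<eta> = k1 * ((Y^2 - 2*Y) - (p^2 - 2*p)) / 2"
    have "(Y^2 - 2*Y) - (p^2 - 2*p) = (Y - p) * (Y + p - 2)" by (simp add: algebra_simps power2_eq_square)
    moreover have "0 < (Y - p) * (Y + p - 2)" using Yp Y2 p0 by (intro mult_pos_pos) auto
    ultimately have eta0: "\<eta> > 0" using k1 by (simp add: \<eta>_def)
    show "\<exists>\<eta>>0. \<forall>t\<in>D. J1 t < J1 \<theta> + 2 * \<eta> \<longrightarrow> J2 ((t + \<gamma>) / 2) < 0"
    proof (intro exI[of _ \<eta>] conjI ballI impI)
      show "\<eta> > 0" by (rule eta0)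
      fix t assume "t \<in> D" and lt: "J1 t < J1 \<theta> + 2 * \<eta>"
      define y where "y = X t"
      have y0: "y > 0" by (simp add: y_def Xpos)
      have e: "J1 \<theta> + 2 * \<eta> = k1 * (Y^2 - 2*Y)" unfolding \<eta>_def J1X p_def
        by (simp add: field_simps)
      have lt2: "J1 t < k1 * (Y^2 - 2*Y)" using lt e by linarith
      have "k1 * (y^2 - 2*y) < k1 * (Y^2 - 2*Y)" using lt2 J1X[of t] by (simp add: y_def)
      hence yy: "y^2 - 2*y < Y^2 - 2*Y" using k1 by simp
      have yY: "y < Y"
      proof (rule ccontr)
        assume "\<not> y < Y" hence "Y \<le> y" by simp
        hence "0 \<le> (y - Y) * (y + Y - 2)" using Y2 y0 by (intro mult_nonneg_nonneg) auto
        moreover have "(y^2 - 2*y) - (Y^2 - 2*Y) = (y - Y) * (y + Y - 2)" by (simp add: algebra_simps power2_eq_square)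
        ultimately show False using yy by linarith
      qed
      define w where "w = c * (x * y)"
      have w0: "w > 0" using c0 x0 y0 by (simp add: w_def)
      have "c * x * y < c * x * Y" using yY cxp by (rule mult_strict_left_mono)
      moreover have "c * x * Y = 2" unfolding Y_def using c0 x0 by simp
      ultimately have wl: "w < 2" unfolding w_def by (simp add: mult.assoc)
      have m: "(X ((t + \<gamma>) / 2))^2 = x * y" using Xmid[of t \<gamma>] by (simp add: x_def y_def)
      have "J2 ((t + \<gamma>) / 2) = k1 * (w * (w - 2))"
        unfolding J2X m w_def by (simp add: power2_eq_square algebra_simps)
      moreover have "w * (w - 2) < 0" using w0 wl by (intro mult_pos_neg) auto
      ultimately show "J2 ((t + \<gamma>) / 2) < 0" using k1 by (simp add: mult_pos_neg)
    qed
  qed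
  show ?thesis using c1 c2 c3 c4 c5 c6 by blast
qed

theorem proposition5p10:
  fixes J1 J2 :: "real \<Rightarrow> real" and D :: "real set" and \<delta>1 \<gamma> :: real
  assumes pot: "(\<exists>k1 k2. k1 > 0 \<and> k2 > 0 \<and> D = {0<..} \<and> J1 = LJ k1 k2)
              \<or> (\<exists>k1 k2 d1. k1 > 0 \<and> k2 > 0 \<and> d1 > 0 \<and> D = UNIV \<and> J1 = Morse k1 k2 d1)"
    and J2_def: "J2 = (\<lambda>z. J1 (2 * z))"
    and delta1: "is_minimizer_on D J1 \<delta>1"
    and gamma: "is_minimizer_on D (J0 D J1 J2) \<gamma>"
  shows "J1 \<gamma> < 0 \<and> J2 \<gamma> < 0 \<and> J2 \<delta>1 < 0
     \<and> J2 \<gamma> > 2 * J2 ((\<delta>1 + \<gamma>) / 2)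
     \<and> (\<forall>t\<in>D. J2 ((\<gamma> + t) / 2) + 1/2 * (J1 \<gamma> + J1 t) - J0 D J1 J2 \<gamma>
                 - 3/2 * (JCB J1 J2 t - J0 D J1 J2 \<gamma>) \<le> 0)
     \<and> (\<forall>\<theta>>0. \<exists>\<eta>>0. \<forall>t\<in>D. J1 t < J1 \<theta> + 2 * \<eta> \<longrightarrow> J2 ((t + \<gamma>) / 2) < 0)"
  proof -
  from pot show ?thesis
  proof
    assume "\<exists>k1 k2. k1 > 0 \<and> k2 > 0 \<and> D = {0<..} \<and> J1 = LJ k1 k2"
    then obtain k1 k2 where "k1 > 0" "k2 > 0" "D = {0<..}" "J1 = LJ k1 k2" by blast
    from LJ_case[OF this J2_def delta1 gamma] show ?thesis .
  next
    assume "\<exists>k1 k2 d1. k1 > 0 \<and> k2 > 0 \<and> d1 > 0 \<and> D = UNIV \<and> J1 = Morse k1 k2 d1"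
    then obtain k1 k2 d1 where "k1 > 0" "k2 > 0" "d1 > 0" "D = UNIV" "J1 = Morse k1 k2 d1" by blast
    from Morse_case[OF this J2_def delta1 gamma] show ?thesis .
  qed
qed

end
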